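(* Let $N\ge 1$ and let $\mathbf X=(X_t)_{t\in I}$ be an $N$-MPR process. Then for all $s\le t\le u$ in $I$: (i) the matrix $\mathcal A_N(s,t)$ is non-singular; (ii) $\mathcal A_N(s,u)=\mathcal A_N(t,u)\mathcal A_N(s,t)$ and $\mathcal A_N(s,s)=I$ (the identity matrix); (iii) there exists a family $\{V_N(t)\}_{t\in I}$ of non-singular, lower triangular $(N+1)\times(N+1)$ matrices such that $\mathcal A_N(s,u)=V_N(u)V_N^{-1}(s)$ for all $s\le u$ in $I$; (iv) the family in (iii) can be chosen so that all diagonal entries of every $V_N(s)$ are positive.
   Context: $I=[l,r]$ is a finite or infinite segment of the real line. $\mathbf X=(X_t)_{t\in I}$ is a real Markov process with $E|X_t|^n<\infty$ for all $n\in\mathbb N$, $t\in I$, and such that the support of the law of each $X_t$ contains infinitely many points. Let $\mathcal F_{\le s}=\sigma(X_v: v\in[l,s])$. The process is $N$-TLI if for every $0<n\le N$ and $s\neq t$ in $I$ the matrix $[\operatorname{cov}(X_t^i,X_s^j)]_{i,j=1,\dots,n}$ is non-singular; it is $N$-MSC if for all $m,j\le N$ the function $(t,s)\mapsto EX_t^mX_s^j$ is continuous at least on the diagonal $s=t$. It is $N$-MPR if it is Markov, $N$-TLI, $N$-MSC and for every $1\le n\le N$ and $s\le t$ in $I$, $E(X_t^n\mid\mathcal F_{\le s})=\sum_{k=0}^n\gamma_{n,k}(s,t)X_s^k$ a.s. for some real coefficients $\gamma_{n,k}(s,t)$ (so it is a polynomial in $X_s$ of degree at most $n$); set $\gamma_{0,0}=1$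 and $\gamma_{i,j}=0$ for $j>i$. Define the lower triangular matrix $\mathcal A_n(s,t)=[\gamma_{i,j}(s,t)]_{i,j=0,\dots,n}$, so that $E(X_t^{(n)}\mid\mathcal F_{\le s})=\mathcal A_n(s,t)X_s^{(n)}$ where $X_t^{(n)}=(1,X_t,\dots,X_t^n)^T$. *)

theory Defs
  imports "HOL-Probability.Probability" "Jordan_Normal_Form.Matrix"
begin

definition segment :: "ereal \<Rightarrow> ereal \<Rightarrow> real set" where
  "segment l r = {t. l \<le> ereal t \<and> ereal t \<le> r}"

definition past_sigma :: "'a measure \<Rightarrow> real set \<Rightarrow> (real \<Rightarrow> 'a \<Rightarrow> real) \<Rightarrow> real \<Rightarrow> 'a measure" where
  "past_sigma M I X s = sigma (space M)
     (\<Union>v\<in>{v\<in>I. v \<le> s}. {X v -` B \<inter> space M | B. B \<in> sets borel})"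

definition rv_sigma :: "'a measure \<Rightarrow> ('a \<Rightarrow> real) \<Rightarrow> 'a measure" where
  "rv_sigma M Y = vimage_algebra (space M) Y borel"

definition markov_process :: "'a measure \<Rightarrow> real set \<Rightarrow> (real \<Rightarrow> 'a \<Rightarrow> real) \<Rightarrow> bool" where
  "markov_process M I X \<longleftrightarrow>
     (\<forall>s\<in>I. \<forall>t\<in>I. s \<le> t \<longrightarrow> (\<forall>B\<in>sets borel.
        AE x in M. real_cond_exp M (past_sigma M I X s) (indicator (X t -` B \<inter> space M)) x
                 = real_cond_exp M (rv_sigma M (X s)) (indicator (X t -` B \<inter> space M)) x))"

definition law_support :: "'a measure \<Rightarrow> ('a \<Rightarrow> real) \<Rightarrow> real set" where
  "law_support M Y = {y. \<forall>e>0. emeasure (distr M borel Y) (ball y e) > 0}"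

definition covariance :: "'a measure \<Rightarrow> ('a \<Rightarrow> real) \<Rightarrow> ('a \<Rightarrow> real) \<Rightarrow> real" where
  "covariance M Y Z = (\<integral>x. Y x * Z x \<partial>M) - (\<integral>x. Y x \<partial>M) * (\<integral>x. Z x \<partial>M)"

definition TLI :: "nat \<Rightarrow> 'a measure \<Rightarrow> real set \<Rightarrow> (real \<Rightarrow> 'a \<Rightarrow> real) \<Rightarrow> bool" where
  "TLI N M I X \<longleftrightarrow> (\<forall>n. 0 < n \<and> n \<le> N \<longrightarrow> (\<forall>s\<in>I. \<forall>t\<in>I. s \<noteq> t \<longrightarrow>
     invertible_mat (mat n n (\<lambda>(i,j). covariance M (\<lambda>x. X t x ^ (i+1)) (\<lambda>x. X s x ^ (j+1))))))"

definition MSC :: "nat \<Rightarrow> 'a measure \<Rightarrow> real set \<Rightarrow> (real \<Rightarrow> 'a \<Rightarrow> real) \<Rightarrow> bool" where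
  "MSC N M I X \<longleftrightarrow> (\<forall>m\<le>N. \<forall>j\<le>N. \<forall>t\<in>I.
     continuous (at (t,t) within I \<times> I) (\<lambda>(a,b). \<integral>x. X a x ^ m * X b x ^ j \<partial>M))"

definition poly_regression :: "nat \<Rightarrow> 'a measure \<Rightarrow> real set \<Rightarrow> (real \<Rightarrow> 'a \<Rightarrow> real)
    \<Rightarrow> (nat \<Rightarrow> nat \<Rightarrow> real \<Rightarrow> real \<Rightarrow> real) \<Rightarrow> bool" where
  "poly_regression N M I X \<gamma> \<longleftrightarrow> (\<forall>n. 1 \<le> n \<and> n \<le> N \<longrightarrow> (\<forall>s\<in>I. \<forall>t\<in>I. s \<le> t \<longrightarrow>
     (AE x in M. real_cond_exp M (past_sigma M I X s) (\<lambda>x. X t x ^ n) x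
               = (\<Sum>k\<le>n. \<gamma> n k s t * X s x ^ k))))"

definition A_mat :: "nat \<Rightarrow> (nat \<Rightarrow> nat \<Rightarrow> real \<Rightarrow> real \<Rightarrow> real) \<Rightarrow> real \<Rightarrow> real \<Rightarrow> real mat" where
  "A_mat N \<gamma> s t = mat (N+1) (N+1) (\<lambda>(i,j). \<gamma> i j s t)"

definition lower_triangular_mat :: "real mat \<Rightarrow> bool" where
  "lower_triangular_mat V \<longleftrightarrow> (\<forall>i<dim_row V. \<forall>j<dim_col V. i < j \<longrightarrow> V $$ (i,j) = 0)"

end

theory Submission imports Defs "Jordan_Normal_Form.Determinant" "HOL-Analysis.Poly_Roots" begin

lemma det_inverse_ex:
  fixes A :: "real mat"
  assumes A: "A \<in> carrier_mat n n" and d: "det A \<noteq> 0"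
  shows "\<exists>B\<in>carrier_mat n n. A * B = 1\<^sub>m n \<and> B * A = 1\<^sub>m n"
  using det_non_zero_imp_unit[OF A d, of "()"] unfolding Units_def ring_mat_def by auto

lemma mat_cancel_right:
  fixes A B H :: "real mat"
  assumes A: "A \<in> carrier_mat n n" and B: "B \<in> carrier_mat n n" and H: "H \<in> carrier_mat n n"
    and d: "det H \<noteq> 0" and eq: "A * H = B * H"
  shows "A = B"
proof -
  obtain G where G: "G \<in> carrier_mat n n" "H * G = 1\<^sub>m n" using det_inverse_ex[OF H d] by auto
  have "A = A * (H * G)" using A G by simp
  also have "\<dots> = (A * H) * G" using A H G by (simp add: assoc_mult_mat)
  also have "\<dots> = (B * H) * G" using eq by simp
  also have "\<dots> = B * (H * G)" using B H G by (simp add: assoc_mult_mat)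
  also have "\<dots> = B" using B G by simp
  finally show ?thesis .
qed

lemma mult_entry:
  fixes L K :: "real mat"
  assumes "L \<in> carrier_mat n n" "K \<in> carrier_mat n n" "i < n" "j < n"
  shows "(L * K) $$ (i,j) = (\<Sum>k<n. L $$ (i,k) * K $$ (k,j))"
  using assms by (simp add: scalar_prod_def atLeast0LessThan)

lemma lower_inverse:
  fixes L K :: "real mat"
  assumes L: "L \<in> carrier_mat n n" and K: "K \<in> carrier_mat n n"
    and low: "\<And>i j. i < j \<Longrightarrow> j < n \<Longrightarrow> L $$ (i,j) = 0"
    and dg: "\<And>i. i < n \<Longrightarrow> L $$ (i,i) \<noteq> 0"
    and LK: "L * K = 1\<^sub>m n"
  shows "\<And>i j. i < j \<Longrightarrow> j < n \<Longrightarrow> K $$ (i,j) = 0"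
    and "\<And>i. i < n \<Longrightarrow> K $$ (i,i) = 1 / L $$ (i,i)"
proof -
  have klow: "K $$ (i,j) = 0" if "i < j" "j < n" for i j
    using that
  proof (induction i rule: less_induct)
    case (less i)
    have "(L * K) $$ (i,j) = 0" using LK less.prems by simp
    moreover have "(L * K) $$ (i,j) = (\<Sum>k<n. L $$ (i,k) * K $$ (k,j))"
      using mult_entry[OF L K] less.prems by simp
    moreover have "(\<Sum>k<n. L $$ (i,k) * K $$ (k,j)) = L $$ (i,i) * K $$ (i,j)"
    proof -
      have "(\<Sum>k<n. L $$ (i,k) * K $$ (k,j)) = (\<Sum>k\<in>{i}. L $$ (i,k) * K $$ (k,j))"
      proof (rule sum.mono_neutral_right)
        show "\<forall>k\<in>{..<n} - {i}. L $$ (i,k) * K $$ (k,j) = 0"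
        proof
          fix k assume k: "k \<in> {..<n} - {i}"
          show "L $$ (i,k) * K $$ (k,j) = 0"
          proof (cases "k < i")
            case True thus ?thesis using less.IH[of k] less.prems by simp
          next
            case False thus ?thesis using k low[of i k] by simp
          qed
        qed
      qed (use less.prems in auto)
      thus ?thesis by simp
    qed
    ultimately show ?case using dg[of i] less.prems by simp
  qed
  show "\<And>i j. i < j \<Longrightarrow> j < n \<Longrightarrow> K $$ (i,j) = 0" using klow by blast
  show "K $$ (i,i) = 1 / L $$ (i,i)" if i: "i < n" for i
  proof -
    have "(L * K) $$ (i,i) = 1" using LK i by simp
    moreover have "(L * K) $$ (i,i) = (\<Sum>k<n. L $$ (i,k) * K $$ (k,i))"
      using mult_entry[OF L K] i by simp
    moreover have "(\<Sum>k<n. L $$ (i,k) * K $$ (k,i)) = (\<Sum>k\<in>{i}. L $$ (i,k) * K $$ (k,i))"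
    proof (rule sum.mono_neutral_right)
      show "\<forall>k\<in>{..<n} - {i}. L $$ (i,k) * K $$ (k,i) = 0"
      proof
        fix k assume k: "k \<in> {..<n} - {i}"
        show "L $$ (i,k) * K $$ (k,i) = 0"
        proof (cases "k < i")
          case True thus ?thesis using klow[of k i] i by simp
        next
          case False thus ?thesis using k low[of i k] by simp
        qed
      qed
    qed (use i in auto)
    ultimately show ?thesis using dg[OF i] by (simp add: field_simps)
  qed
qed

lemma continuous_det_mat:
  fixes F :: "nat \<Rightarrow> nat \<Rightarrow> 'b::t2_space \<Rightarrow> real"
  assumes "\<And>i j. i < n \<Longrightarrow> j < n \<Longrightarrow> continuous (at x within S) (F i j)"
  shows "continuous (at x within S) (\<lambda>y. det (mat n n (\<lambda>(i,j). F i j y)))"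
proof -
  have eq: "det (mat n n (\<lambda>(i,j). F i j y)) =
     (\<Sum>p\<in>{p. p permutes {0..<n}}. signof p * (\<Prod>i = 0..<n. F i (p i) y))" for y
  proof -
    have "det (mat n n (\<lambda>(i,j). F i j y)) = (\<Sum>p\<in>{p. p permutes {0..<n}}.
       signof p * (\<Prod>i = 0..<n. mat n n (\<lambda>(i,j). F i j y) $$ (i, p i)))"
      by (rule det_def') simp
    also have "\<dots> = (\<Sum>p\<in>{p. p permutes {0..<n}}. signof p * (\<Prod>i = 0..<n. F i (p i) y))"
    proof (rule sum.cong[OF refl])
      fix p assume "p \<in> {p. p permutes {0..<n}}"
      hence "\<And>i. i < n \<Longrightarrow> p i < n" by (auto dest: permutes_in_image)
      thus "signof p * (\<Prod>i = 0..<n. mat n n (\<lambda>(i,j). F i j y) $$ (i, p i)) =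
            signof p * (\<Prod>i = 0..<n. F i (p i) y)" by (auto intro!: prod.cong)
    qed
    finally show ?thesis .
  qed
  have "continuous (at x within S)
     (\<lambda>y. \<Sum>p\<in>{p. p permutes {0..<n}}. signof p * (\<Prod>i = 0..<n. F i (p i) y))"
  proof (intro continuous_sum continuous_mult continuous_const continuous_prod)
    fix p i assume "p \<in> {p. p permutes {0..<n}}" "i \<in> {0..<n}"
    thus "continuous (at x within S) (F i (p i))"
      using assms permutes_in_image[of p "{0..<n}" i] by auto
  qed
  thus ?thesis unfolding eq .
qed


lemma abs_prod_le_sq: "\<bar>a * b\<bar> \<le> a^2 + (b::real)^2"
proof -
  have "0 \<le> (\<bar>a\<bar> - \<bar>b\<bar>)^2" by simp
  hence "2 * (\<bar>a\<bar> * \<bar>b\<bar>) \<le> \<bar>a\<bar>^2 + \<bar>b\<bar>^2" by (simp add: power2_diff)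
  moreover have "0 \<le> \<bar>a\<bar> * \<bar>b\<bar>" by simp
  ultimately show ?thesis unfolding abs_mult power2_abs by linarith
qed

lemma pow_sq_abs: "((y::real) ^ i)^2 = \<bar>y\<bar> ^ (2*i)"
proof -
  have "\<bar>y\<bar> ^ (2*i) = (\<bar>y\<bar>^2)^i" by (simp only: power_mult)
  also have "\<dots> = (y^2)^i" by simp
  also have "\<dots> = y^(2*i)" by (simp only: power_mult)
  also have "\<dots> = y^(i*2)" by (simp only: mult.commute)
  also have "\<dots> = (y^i)^2" by (simp only: power_mult)
  finally show ?thesis by simp
qed

lemma sq_pos: "(x::real) \<noteq> 0 \<Longrightarrow> 0 < x * x"
  by (metis linorder_neq_iff mult_neg_neg mult_pos_pos)

locale mpr = prob_space M for M :: "'a measure" +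
  fixes I :: "real set" and X :: "real \<Rightarrow> 'a \<Rightarrow> real" and N :: nat
    and \<gamma> :: "nat \<Rightarrow> nat \<Rightarrow> real \<Rightarrow> real \<Rightarrow> real"
  assumes conv: "\<And>a b c. a \<in> I \<Longrightarrow> c \<in> I \<Longrightarrow> a \<le> b \<Longrightarrow> b \<le> c \<Longrightarrow> b \<in> I"
  and meas: "\<forall>t\<in>I. X t \<in> borel_measurable M"
  and integ: "\<forall>t\<in>I. \<forall>n::nat. integrable M (\<lambda>x. \<bar>X t x\<bar> ^ n)"
  and supp: "\<forall>t\<in>I. infinite (law_support M (X t))"
  and msc: "MSC N M I X"
  and preg: "poly_regression N M I X \<gamma>"
  and g00: "\<forall>s t. \<gamma> 0 0 s t = 1"
  and gup: "\<forall>i j s t. j > i \<longrightarrow> \<gamma> i j s t = 0"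
begin

definition G :: "real \<Rightarrow> 'a set set" where
  "G s = (\<Union>v\<in>{v\<in>I. v \<le> s}. {X v -` B \<inter> space M | B. B \<in> sets borel})"

lemma G_sub: "G s \<subseteq> sets M"
  using meas unfolding G_def by (auto intro: measurable_sets)

lemma G_pow: "G s \<subseteq> Pow (space M)"
  unfolding G_def by auto

lemma sets_past: "sets (past_sigma M I X s) = sigma_sets (space M) (G s)"
  unfolding past_sigma_def G_def[symmetric] using G_pow by (simp add: sets_measure_of)

lemma space_past: "space (past_sigma M I X s) = space M"
  unfolding past_sigma_def G_def[symmetric] using G_pow by (simp add: space_measure_of)

lemma subalg: "subalgebra M (past_sigma M I X s)"
  unfolding subalgebra_def sets_past space_past
  using sets.sigma_sets_subset[OF G_sub] by simp

lemma sfs: "sigma_finite_subalgebra M (past_sigma M I X s)"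
  by (rule finite_measure_subalgebra_is_sigma_finite)
     (simp add: finite_measure_subalgebra_def finite_measure_subalgebra_axioms_def subalg
        finite_measure_axioms)

lemma X_meas_past: "v \<in> I \<Longrightarrow> v \<le> s \<Longrightarrow> X v \<in> borel_measurable (past_sigma M I X s)"
proof (rule borel_measurableI)
  fix S :: "real set" assume "open S" "v \<in> I" "v \<le> s"
  hence "X v -` S \<inter> space M \<in> G s" unfolding G_def using borel_open[OF \<open>open S\<close>] by blast
  thus "X v -` S \<inter> space (past_sigma M I X s) \<in> sets (past_sigma M I X s)"
    unfolding sets_past space_past by (rule sigma_sets.Basic)
qed

lemma Xm: "t \<in> I \<Longrightarrow> X t \<in> borel_measurable M" using meas by auto

lemma int_prod: 
  assumes "t \<in> I" "v \<in> I"
  shows "integrable M (\<lambda>x. X t x ^ i * X v x ^ j)"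
proof (rule Bochner_Integration.integrable_bound)
  have [measurable]: "X t \<in> borel_measurable M" "X v \<in> borel_measurable M" using assms Xm by auto
  show "integrable M (\<lambda>x. \<bar>X t x\<bar> ^ (2*i) + \<bar>X v x\<bar> ^ (2*j))"
    using integ assms by auto
  show "(\<lambda>x. X t x ^ i * X v x ^ j) \<in> borel_measurable M" by measurable
  show "AE x in M. norm (X t x ^ i * X v x ^ j) \<le> norm (\<bar>X t x\<bar> ^ (2*i) + \<bar>X v x\<bar> ^ (2*j))"
  proof (rule AE_I2)
    fix x
    have "norm (X t x ^ i * X v x ^ j) \<le> (X t x ^ i)^2 + (X v x ^ j)^2"
      using abs_prod_le_sq by simp
    thus "norm (X t x ^ i * X v x ^ j) \<le> norm (\<bar>X t x\<bar> ^ (2*i) + \<bar>X v x\<bar> ^ (2*j))"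
      by (simp add: pow_sq_abs)
  qed
qed

lemma key:
  assumes s: "s \<in> I" and t: "t \<in> I" and st: "s \<le> t" and iN: "i \<le> N" and v: "v \<in> I" and vs: "v \<le> s"
  shows "(\<integral>x. X t x ^ i * X v x ^ j \<partial>M) = (\<Sum>k\<le>i. \<gamma> i k s t * (\<integral>x. X s x ^ k * X v x ^ j \<partial>M))"
proof (cases "i = 0")
  case True thus ?thesis using g00 by simp
next
  case False
  let ?F = "past_sigma M I X s"
  interpret S: sigma_finite_subalgebra M ?F by (rule sfs)
  have AE: "AE x in M. real_cond_exp M ?F (\<lambda>x. X t x ^ i) x = (\<Sum>k\<le>i. \<gamma> i k s t * X s x ^ k)"
    using preg False iN s t st unfolding poly_regression_def by auto
  have [measurable]: "X t \<in> borel_measurable M" "X v \<in> borel_measurable M" "X s \<in> borel_measurable M"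
    using s t v Xm by auto
  have [measurable]: "X v \<in> borel_measurable ?F" using X_meas_past v vs .
  have fF: "(\<lambda>x. X v x ^ j) \<in> borel_measurable ?F" by measurable
  have ce: "real_cond_exp M ?F (\<lambda>x. X t x ^ i) \<in> borel_measurable M"
    by (rule measurable_from_subalg[OF subalg[of s]]) simp
  have i1: "integrable M (\<lambda>x. X v x ^ j * X t x ^ i)"
    using int_prod[OF v t] .
  have "(\<integral>x. X t x ^ i * X v x ^ j \<partial>M) = (\<integral>x. X v x ^ j * X t x ^ i \<partial>M)"
    by (simp add: mult.commute)
  also have "\<dots> = (\<integral>x. X v x ^ j * real_cond_exp M ?F (\<lambda>x. X t x ^ i) x \<partial>M)"
    using S.real_cond_exp_intg(2)[OF i1 fF] by simp
  also have "\<dots> = (\<integral>x. X v x ^ j * (\<Sum>k\<le>i. \<gamma> i k s t * X s x ^ k) \<partial>M)"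
    by (rule integral_cong_AE) (use ce AE in auto)
  also have "\<dots> = (\<integral>x. (\<Sum>k\<le>i. \<gamma> i k s t * (X s x ^ k * X v x ^ j)) \<partial>M)"
    by (simp add: sum_distrib_left algebra_simps)
  also have "\<dots> = (\<Sum>k\<le>i. (\<integral>x. \<gamma> i k s t * (X s x ^ k * X v x ^ j) \<partial>M))"
    by (rule Bochner_Integration.integral_sum) (use int_prod[OF s v] in auto)
  also have "\<dots> = (\<Sum>k\<le>i. \<gamma> i k s t * (\<integral>x. X s x ^ k * X v x ^ j \<partial>M))"
    by simp
  finally show ?thesis .
qed


lemma hankel_inj:
  assumes s: "s \<in> I"
    and h: "\<forall>j\<le>n. (\<Sum>m\<le>n. c m * (\<integral>x. X s x ^ m * X s x ^ j \<partial>M)) = 0"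
  shows "\<forall>m\<le>n. c m = 0"
proof (rule ccontr)
  assume nz: "\<not> (\<forall>m\<le>n. c m = 0)"
  define p where "p = (\<lambda>y::real. \<Sum>m\<le>n. c m * y ^ m)"
  have [measurable]: "X s \<in> borel_measurable M" using Xm s .
  have sq: "(p (X s x))^2 = (\<Sum>j\<le>n. \<Sum>m\<le>n. c j * c m * (X s x ^ m * X s x ^ j))" for x
    unfolding p_def power2_eq_square sum_product by (simp add: algebra_simps)
  have intg: "integrable M (\<lambda>x. \<Sum>j\<le>n. \<Sum>m\<le>n. c j * c m * (X s x ^ m * X s x ^ j))"
    using int_prod[OF s s] by (intro Bochner_Integration.integrable_sum integrable_mult_right) auto
  have "(\<integral>x. (\<Sum>j\<le>n. \<Sum>m\<le>n. c j * c m * (X s x ^ m * X s x ^ j)) \<partial>M)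
      = (\<Sum>j\<le>n. \<Sum>m\<le>n. c j * c m * (\<integral>x. X s x ^ m * X s x ^ j \<partial>M))"
    using int_prod[OF s s] by (simp add: Bochner_Integration.integral_sum integrable_sum)
  also have "\<dots> = (\<Sum>j\<le>n. c j * (\<Sum>m\<le>n. c m * (\<integral>x. X s x ^ m * X s x ^ j \<partial>M)))"
    by (simp add: sum_distrib_left mult.assoc)
  also have "\<dots> = 0" using h by simp
  finally have i0: "(\<integral>x. (p (X s x))^2 \<partial>M) = 0" unfolding sq .
  have intp: "integrable M (\<lambda>x. (p (X s x))^2)" unfolding sq using intg .
  have "AE x in M. (p (X s x))^2 = 0"
    using integral_nonneg_eq_0_iff_AE[OF intp] i0 by simp
  hence AEp: "AE x in M. p (X s x) = 0" by simp
  have sub: "law_support M (X s) \<subseteq> {y. p y = 0}"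
  proof
    fix y assume y: "y \<in> law_support M (X s)"
    show "y \<in> {y. p y = 0}"
    proof (rule ccontr)
      assume "y \<notin> {y. p y = 0}"
      hence py: "p y \<noteq> 0" by simp
      have cp: "continuous (at y) p" unfolding p_def by (intro continuous_intros)
      obtain e where e: "e > 0" "\<forall>z. dist y z < e \<longrightarrow> p z \<noteq> 0"
        using continuous_at_avoid[of y p 0, OF cp py] by blast
      have "emeasure (distr M borel (X s)) (ball y e) > 0" using y e(1) unfolding law_support_def by auto
      moreover have "emeasure (distr M borel (X s)) (ball y e) = emeasure M (X s -` ball y e \<inter> space M)"
        by (rule emeasure_distr) auto
      moreover have "emeasure M (X s -` ball y e \<inter> space M) = 0"
      proof -
        have "AE x in M. X s x \<notin> ball y e"
          using AEp by eventually_elim (use e(2) in \<open>auto simp: mem_ball\<close>)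
        thus ?thesis by (subst (asm) AE_iff_measurable[of "X s -` ball y e \<inter> space M"]) auto
      qed
      ultimately show False by simp
    qed
  qed
  have "infinite {y. p y = 0}" using supp s sub infinite_super by blast
  moreover have "finite {y. p y = 0}" unfolding p_def
    by (rule polyfun_rootbound_finite) (use nz in auto)
  ultimately show False by simp
qed

definition Mv :: "nat \<Rightarrow> real \<Rightarrow> real \<Rightarrow> real mat" where
  "Mv n b v = mat (Suc n) (Suc n) (\<lambda>(i,j). \<integral>x. X b x ^ i * X v x ^ j \<partial>M)"

lemma Mv_carrier[simp]: "Mv n b v \<in> carrier_mat (Suc n) (Suc n)"
  unfolding Mv_def by simp

lemma A_carrier[simp]: "A_mat n \<gamma> a b \<in> carrier_mat (Suc n) (Suc n)"
  unfolding A_mat_def by simp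

lemma MAH:
  assumes n: "n \<le> N" and a: "a \<in> I" and b: "b \<in> I" and ab: "a \<le> b" and v: "v \<in> I" and va: "v \<le> a"
  shows "Mv n b v = A_mat n \<gamma> a b * Mv n a v"
proof (rule eq_matI)
  fix i j assume i: "i < dim_row (A_mat n \<gamma> a b * Mv n a v)" and j: "j < dim_col (A_mat n \<gamma> a b * Mv n a v)"
  hence i': "i < Suc n" and j': "j < Suc n" by (auto simp: A_mat_def Mv_def)
  have "(A_mat n \<gamma> a b * Mv n a v) $$ (i,j) = (\<Sum>k<Suc n. A_mat n \<gamma> a b $$ (i,k) * Mv n a v $$ (k,j))"
    by (rule mult_entry) (use i' j' in auto)
  also have "\<dots> = (\<Sum>k<Suc n. \<gamma> i k a b * (\<integral>x. X a x ^ k * X v x ^ j \<partial>M))"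
    using i' j' by (intro sum.cong) (auto simp: A_mat_def Mv_def)
  also have "\<dots> = (\<Sum>k\<le>i. \<gamma> i k a b * (\<integral>x. X a x ^ k * X v x ^ j \<partial>M))"
  proof (rule sum.mono_neutral_right)
    show "\<forall>k\<in>{..<Suc n} - {..i}. \<gamma> i k a b * (\<integral>x. X a x ^ k * X v x ^ j \<partial>M) = 0"
      using gup by auto
  qed (use i' in auto)
  also have "\<dots> = (\<integral>x. X b x ^ i * X v x ^ j \<partial>M)"
    using key[OF a b ab _ v va, of i j] i' n by simp
  finally show "Mv n b v $$ (i,j) = (A_mat n \<gamma> a b * Mv n a v) $$ (i,j)"
    using i' j' by (simp add: Mv_def)
qed (auto simp: A_mat_def Mv_def)

lemma det_H: 
  assumes s: "s \<in> I"
  shows "det (Mv n s s) \<noteq> 0"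
proof
  assume "det (Mv n s s) = 0"
  then obtain w where w: "w \<in> carrier_vec (Suc n)" "w \<noteq> 0\<^sub>v (Suc n)" "Mv n s s *\<^sub>v w = 0\<^sub>v (Suc n)"
    using det_0_iff_vec_prod_zero_field[OF Mv_carrier] by blast
  have "\<forall>j\<le>n. (\<Sum>m\<le>n. w $ m * (\<integral>x. X s x ^ m * X s x ^ j \<partial>M)) = 0"
  proof (intro allI impI)
    fix j assume j: "j \<le> n"
    have "(Mv n s s *\<^sub>v w) $ j = 0" using w(3) j by simp
    moreover have "(Mv n s s *\<^sub>v w) $ j = (\<Sum>m<Suc n. (\<integral>x. X s x ^ j * X s x ^ m \<partial>M) * w $ m)"
      using j w(1) by (simp add: Mv_def scalar_prod_def atLeast0LessThan)
    moreover have "(\<Sum>m<Suc n. (\<integral>x. X s x ^ j * X s x ^ m \<partial>M) * w $ m)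
        = (\<Sum>m\<le>n. w $ m * (\<integral>x. X s x ^ m * X s x ^ j \<partial>M))"
      by (simp add: lessThan_Suc_atMost mult.commute)
    ultimately show "(\<Sum>m\<le>n. w $ m * (\<integral>x. X s x ^ m * X s x ^ j \<partial>M)) = 0" by simp
  qed
  from hankel_inj[OF s this] have "\<forall>m\<le>n. w $ m = 0" .
  hence "w = 0\<^sub>v (Suc n)" using w(1) by (intro eq_vecI) auto
  with w(2) show False by simp
qed

lemma CK:
  assumes n: "n \<le> N" and s: "s \<in> I" and t: "t \<in> I" and u: "u \<in> I" and st: "s \<le> t" and tu: "t \<le> u"
  shows "A_mat n \<gamma> s u = A_mat n \<gamma> t u * A_mat n \<gamma> s t"
proof (rule mat_cancel_right[OF A_carrier _ Mv_carrier det_H[OF s]])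
  show "A_mat n \<gamma> t u * A_mat n \<gamma> s t \<in> carrier_mat (Suc n) (Suc n)"
    by (rule mult_carrier_mat[OF A_carrier A_carrier])
  have "A_mat n \<gamma> s u * Mv n s s = Mv n u s" using MAH[OF n s u _ s] st tu by simp
  also have "\<dots> = A_mat n \<gamma> t u * Mv n t s" using MAH[OF n t u tu s st] .
  also have "\<dots> = A_mat n \<gamma> t u * (A_mat n \<gamma> s t * Mv n s s)" using MAH[OF n s t st s] by simp
  also have "\<dots> = (A_mat n \<gamma> t u * A_mat n \<gamma> s t) * Mv n s s"
    by (rule assoc_mult_mat[symmetric, of _ "Suc n" "Suc n" _ "Suc n" _ "Suc n"]) auto
  finally show "A_mat n \<gamma> s u * Mv n s s = A_mat n \<gamma> t u * A_mat n \<gamma> s t * Mv n s s" .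
qed

lemma A_id:
  assumes n: "n \<le> N" and s: "s \<in> I"
  shows "A_mat n \<gamma> s s = 1\<^sub>m (Suc n)"
proof (rule mat_cancel_right[OF A_carrier _ Mv_carrier det_H[OF s]])
  show "1\<^sub>m (Suc n) \<in> carrier_mat (Suc n) (Suc n)" by simp
  have "A_mat n \<gamma> s s * Mv n s s = Mv n s s" using MAH[OF n s s _ s] by simp
  thus "A_mat n \<gamma> s s * Mv n s s = 1\<^sub>m (Suc n) * Mv n s s"
    using left_mult_one_mat[of "Mv n s s" "Suc n" "Suc n"] by simp
qed


lemma det_A_prod: "det (A_mat n \<gamma> a b) = (\<Prod>k<Suc n. \<gamma> k k a b)"
proof -
  have "det (A_mat n \<gamma> a b) = prod_list (diag_mat (A_mat n \<gamma> a b))"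
    by (rule det_lower_triangular[OF _ A_carrier]) (use gup in \<open>auto simp: A_mat_def\<close>)
  also have "\<dots> = prod_list (map (\<lambda>k. \<gamma> k k a b) [0..<Suc n])"
    unfolding diag_mat_def by (intro arg_cong[where f=prod_list] map_cong) (auto simp: A_mat_def)
  also have "\<dots> = (\<Prod>k\<in>{0..<Suc n}. \<gamma> k k a b)"
    by (simp add: prod.atLeastLessThan_conv_list)
  finally show ?thesis by (simp add: atLeast0LessThan)
qed

lemma cont_entry1:
  assumes c: "c \<in> I" and i: "i \<le> N" and j: "j \<le> N"
  shows "continuous (at (c,c) within I \<times> I) (\<lambda>p. \<integral>x. X (snd p) x ^ i * X (fst p) x ^ j \<partial>M)"
proof -
  have "continuous (at (c,c) within I \<times> I) (\<lambda>(a,b). \<integral>x. X a x ^ j * X b x ^ i \<partial>M)"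
    using msc c i j unfolding MSC_def by blast
  moreover have "(\<lambda>(a,b). \<integral>x. X a x ^ j * X b x ^ i \<partial>M) = (\<lambda>p. \<integral>x. X (snd p) x ^ i * X (fst p) x ^ j \<partial>M)"
    by (auto simp: mult.commute)
  ultimately show ?thesis by simp
qed

lemma cont_entry2:
  assumes c: "c \<in> I" and i: "i \<le> N" and j: "j \<le> N"
  shows "continuous (at (c,c) within I \<times> I) (\<lambda>p. \<integral>x. X (fst p) x ^ i * X (fst p) x ^ j \<partial>M)"
proof -
  let ?g = "\<lambda>(a,b). \<integral>x. X a x ^ i * X b x ^ j \<partial>M"
  let ?f = "\<lambda>p::real\<times>real. (fst p, fst p)"
  have g: "continuous (at (c,c) within I \<times> I) ?g"
    using msc c i j unfolding MSC_def by blast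
  have f: "continuous (at (c,c) within I \<times> I) ?f" by (intro continuous_intros)
  have "?f ` (I \<times> I) \<subseteq> I \<times> I" by auto
  hence g': "continuous (at (?f (c,c)) within ?f ` (I \<times> I)) ?g"
    using continuous_within_subset[OF g] by simp
  have "continuous (at (c,c) within I \<times> I) (?g \<circ> ?f)"
    by (rule continuous_within_compose[OF f g'])
  moreover have "?g \<circ> ?f = (\<lambda>p. \<integral>x. X (fst p) x ^ i * X (fst p) x ^ j \<partial>M)"
    by (auto simp: o_def)
  ultimately show ?thesis by simp
qed

lemma local_pos:
  assumes n: "n \<le> N" and c: "c \<in> I"
  shows "\<exists>\<delta>>0. \<forall>a b. a \<in> I \<longrightarrow> b \<in> I \<longrightarrow> a \<le> b \<longrightarrow> dist a c < \<delta> \<longrightarrow> dist b c < \<delta>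
           \<longrightarrow> det (A_mat n \<gamma> a b) > 0"
proof -
  define h where "h = (\<lambda>p::real\<times>real. det (Mv n (snd p) (fst p)) * det (Mv n (fst p) (fst p)))"
  have "continuous (at (c,c) within I \<times> I) h"
    unfolding h_def Mv_def
    by (intro continuous_mult continuous_det_mat) (auto intro!: cont_entry1 cont_entry2 c simp: n less_Suc_eq_le
          elim!: order.trans[OF _ n])
  moreover have hc: "h (c,c) > 0"
    using sq_pos[OF det_H[OF c, of n]] unfolding h_def by simp
  ultimately have "eventually (\<lambda>p. 0 < h p) (at (c,c) within I \<times> I)"
    unfolding continuous_within by (rule order_tendstoD(1))
  then obtain d where d: "d > 0" "\<forall>p\<in>I \<times> I. p \<noteq> (c,c) \<and> dist p (c,c) < d \<longrightarrow> 0 < h p"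
    unfolding eventually_at by blast
  have hpos: "0 < h (a,b)" if "a \<in> I" "b \<in> I" "dist a c < d/2" "dist b c < d/2" for a b
  proof (cases "(a,b) = (c,c)")
    case True thus ?thesis using hc by simp
  next
    case False
    have "dist (a,b) (c,c) \<le> \<bar>dist a c\<bar> + \<bar>dist b c\<bar>"
      unfolding dist_Pair_Pair by (rule sqrt_sum_squares_le_sum_abs)
    also have "\<dots> < d" using that by simp
    finally show ?thesis using d(2) that False by auto
  qed
  show ?thesis
  proof (intro exI[of _ "d/2"] conjI allI impI)
    show "0 < d/2" using d by simp
    fix a b assume ab: "a \<in> I" "b \<in> I" "a \<le> b" "dist a c < d/2" "dist b c < d/2"
    have "h (a,b) = det (A_mat n \<gamma> a b) * (det (Mv n a a) * det (Mv n a a))"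
      unfolding h_def using MAH[OF n ab(1) ab(2) ab(3) ab(1)] det_mult[OF A_carrier Mv_carrier]
      by simp
    moreover have "det (Mv n a a) * det (Mv n a a) > 0" using sq_pos[OF det_H[OF ab(1), of n]] .
    ultimately show "det (A_mat n \<gamma> a b) > 0" using hpos[OF ab(1,2,4,5)]
      by (simp add: zero_less_mult_iff)
  qed
qed

lemma det_mult_chain:
  assumes n: "n \<le> N" and "s \<in> I" "t \<in> I" "u \<in> I" "s \<le> t" "t \<le> u"
  shows "det (A_mat n \<gamma> s u) = det (A_mat n \<gamma> t u) * det (A_mat n \<gamma> s t)"
  using CK[OF assms] det_mult[OF A_carrier A_carrier] by simp

lemma global_pos:
  assumes n: "n \<le> N" and a: "a \<in> I" and b0: "b0 \<in> I" and ab0: "a \<le> b0"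
  shows "det (A_mat n \<gamma> a b0) > 0"
proof (rule ccontr)
  assume neg: "\<not> det (A_mat n \<gamma> a b0) > 0"
  define T where "T = {b\<in>I. a \<le> b \<and> det (A_mat n \<gamma> a b) \<le> 0}"
  have b0T: "b0 \<in> T" using neg b0 ab0 unfolding T_def by auto
  hence Tne: "T \<noteq> {}" by auto
  have bdd: "bdd_below T" unfolding T_def by (rule bdd_belowI[of _ a]) auto
  define bs where "bs = Inf T"
  have abs_: "a \<le> bs" unfolding bs_def by (rule cInf_greatest[OF Tne]) (auto simp: T_def)
  have bsb0: "bs \<le> b0" unfolding bs_def by (rule cInf_lower[OF b0T bdd])
  have bsI: "bs \<in> I" using conv[OF a b0 abs_ bsb0] .
  obtain \<delta> where \<delta>: "\<delta> > 0" "\<forall>x y. x \<in> I \<longrightarrow> y \<in> I \<longrightarrow> x \<le> y \<longrightarrow> dist x bs < \<delta> \<longrightarrow> dist y bs < \<delta>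
           \<longrightarrow> det (A_mat n \<gamma> x y) > 0"
    using local_pos[OF n bsI] by blast
  have "Inf T < bs + \<delta>" using \<delta>(1) bs_def by simp
  then obtain b where bT: "b \<in> T" and bl: "b < bs + \<delta>"
    using cInf_less_iff[OF Tne bdd] by blast
  have bI: "b \<in> I" and ab: "a \<le> b" and gb: "det (A_mat n \<gamma> a b) \<le> 0" using bT unfolding T_def by auto
  have bsb: "bs \<le> b" unfolding bs_def by (rule cInf_lower[OF bT bdd])
  define a' where "a' = max a (bs - \<delta>/2)"
  have aa': "a \<le> a'" and a'bs: "a' \<le> bs" using abs_ \<delta>(1) unfolding a'_def by auto
  have a'I: "a' \<in> I" using conv[OF a bsI aa' a'bs] .
  have g1: "det (A_mat n \<gamma> a a') > 0"
  proof (cases "a' = a")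
    case True thus ?thesis using A_id[OF n a] by simp
  next
    case False
    hence "a' = bs - \<delta>/2" unfolding a'_def by auto
    hence "a' < bs" using \<delta>(1) by simp
    hence "a' \<notin> T" unfolding bs_def using cInf_lower[OF _ bdd] by force
    thus ?thesis using a'I aa' unfolding T_def by auto
  qed
  have g2: "det (A_mat n \<gamma> a' b) > 0"
  proof -
    have "dist a' bs < \<delta>" using a'bs \<delta>(1) unfolding a'_def dist_real_def by auto
    moreover have "dist b bs < \<delta>" using bsb bl unfolding dist_real_def by auto
    ultimately show ?thesis using \<delta>(2) a'I bI a'bs bsb by auto
  qed
  have "det (A_mat n \<gamma> a b) = det (A_mat n \<gamma> a' b) * det (A_mat n \<gamma> a a')"
    by (rule det_mult_chain[OF n a a'I bI aa']) (use a'bs bsb in auto)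
  with g1 g2 gb show False by (simp add: zero_less_mult_iff) (smt (verit) mult_pos_pos)
qed

lemma diag_pos:
  assumes k: "k \<le> N" and a: "a \<in> I" and b: "b \<in> I" and ab: "a \<le> b"
  shows "\<gamma> k k a b > 0"
proof (cases k)
  case 0 thus ?thesis using g00 by simp
next
  case (Suc m)
  have P1: "(\<Prod>i<Suc k. \<gamma> i i a b) > 0" using global_pos[OF k a b ab] det_A_prod by simp
  have P0: "(\<Prod>i<k. \<gamma> i i a b) > 0" using global_pos[of m, OF _ a b ab] det_A_prod k Suc by simp
  have "(\<Prod>i<Suc k. \<gamma> i i a b) = (\<Prod>i<k. \<gamma> i i a b) * \<gamma> k k a b"
    by (rule prod.lessThan_Suc)
  with P0 P1 show ?thesis by (metis zero_less_mult_pos)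
qed


lemma A_lower: "lower_triangular_mat (A_mat n \<gamma> a b)"
  unfolding lower_triangular_mat_def A_mat_def using gup by auto

lemma A_inv_ex:
  assumes "a \<in> I" "b \<in> I" "a \<le> b"
  shows "\<exists>B\<in>carrier_mat (Suc N) (Suc N). A_mat N \<gamma> a b * B = 1\<^sub>m (Suc N) \<and> B * A_mat N \<gamma> a b = 1\<^sub>m (Suc N)"
  using det_inverse_ex[OF A_carrier] global_pos[OF le_refl assms] by simp

lemma parts_i_ii:
  assumes s: "s \<in> I" and t: "t \<in> I" and u: "u \<in> I" and st: "s \<le> t" and tu: "t \<le> u"
  shows "invertible_mat (A_mat N \<gamma> s t) \<and> A_mat N \<gamma> s u = A_mat N \<gamma> t u * A_mat N \<gamma> s t
     \<and> A_mat N \<gamma> s s = 1\<^sub>m (N+1)"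
proof (intro conjI)
  obtain B where B: "B \<in> carrier_mat (Suc N) (Suc N)" "A_mat N \<gamma> s t * B = 1\<^sub>m (Suc N)"
      "B * A_mat N \<gamma> s t = 1\<^sub>m (Suc N)" using A_inv_ex[OF s t st] by blast
  show "invertible_mat (A_mat N \<gamma> s t)"
    unfolding invertible_mat_def inverts_mat_def using B
    by (intro conjI exI[of _ B]) (auto simp: A_mat_def square_mat.simps)
  show "A_mat N \<gamma> s u = A_mat N \<gamma> t u * A_mat N \<gamma> s t" by (rule CK[OF le_refl s t u st tu])
  show "A_mat N \<gamma> s s = 1\<^sub>m (N+1)" using A_id[OF le_refl s] by simp
qed

lemma V_exists:
  "\<exists>V Vinv. (\<forall>t\<in>I. V t \<in> carrier_mat (N+1) (N+1) \<and> Vinv t \<in> carrier_mat (N+1) (N+1)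
              \<and> V t * Vinv t = 1\<^sub>m (N+1) \<and> Vinv t * V t = 1\<^sub>m (N+1)
              \<and> lower_triangular_mat (V t) \<and> (\<forall>i\<le>N. V t $$ (i,i) > 0))
            \<and> (\<forall>s\<in>I. \<forall>u\<in>I. s \<le> u \<longrightarrow> A_mat N \<gamma> s u = V u * Vinv s)"
proof (cases "I = {}")
  case True thus ?thesis by blast
next
  case False
  then obtain s0 where s0: "s0 \<in> I" by blast
  define Ai where "Ai a b = (SOME B. B \<in> carrier_mat (Suc N) (Suc N) \<and> A_mat N \<gamma> a b * B = 1\<^sub>m (Suc N)
      \<and> B * A_mat N \<gamma> a b = 1\<^sub>m (Suc N))" for a b
  have Ai: "Ai a b \<in> carrier_mat (Suc N) (Suc N) \<and> A_mat N \<gamma> a b * Ai a b = 1\<^sub>m (Suc N)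
      \<and> Ai a b * A_mat N \<gamma> a b = 1\<^sub>m (Suc N)" if "a \<in> I" "b \<in> I" "a \<le> b" for a b
    unfolding Ai_def by (rule someI_ex) (use A_inv_ex[OF that] in blast)
  have Ai_low: "lower_triangular_mat (Ai a b) \<and> (\<forall>i\<le>N. Ai a b $$ (i,i) > 0)"
    if ab: "a \<in> I" "b \<in> I" "a \<le> b" for a b
  proof -
    have c: "Ai a b \<in> carrier_mat (Suc N) (Suc N)" and e: "A_mat N \<gamma> a b * Ai a b = 1\<^sub>m (Suc N)"
      using Ai[OF ab] by auto
    have low: "\<And>i j. i < j \<Longrightarrow> j < Suc N \<Longrightarrow> A_mat N \<gamma> a b $$ (i,j) = 0"
      using gup by (auto simp: A_mat_def)
    have dg: "\<And>i. i < Suc N \<Longrightarrow> A_mat N \<gamma> a b $$ (i,i) \<noteq> 0"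
      using diag_pos[OF _ ab] by (auto simp: A_mat_def less_Suc_eq_le intro!: less_imp_neq[symmetric])
    note li = lower_inverse[OF A_carrier c low dg e]
    show ?thesis
    proof
      show "lower_triangular_mat (Ai a b)" unfolding lower_triangular_mat_def using c li(1) by auto
      show "\<forall>i\<le>N. Ai a b $$ (i,i) > 0"
      proof (intro allI impI)
        fix i assume "i \<le> N"
        hence "i < Suc N" by simp
        thus "Ai a b $$ (i,i) > 0" using li(2)[of i] diag_pos[OF _ ab, of i] by (simp add: A_mat_def)
      qed
    qed
  qed
  define V where "V u = (if s0 \<le> u then A_mat N \<gamma> s0 u else Ai u s0)" for u
  define Vi where "Vi u = (if s0 \<le> u then Ai s0 u else A_mat N \<gamma> u s0)" for u
  show ?thesis
  proof (rule exI[of _ V], rule exI[of _ Vi], intro conjI)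
    show "\<forall>t\<in>I. V t \<in> carrier_mat (N+1) (N+1) \<and> Vi t \<in> carrier_mat (N+1) (N+1)
              \<and> V t * Vi t = 1\<^sub>m (N+1) \<and> Vi t * V t = 1\<^sub>m (N+1)
              \<and> lower_triangular_mat (V t) \<and> (\<forall>i\<le>N. V t $$ (i,i) > 0)"
    proof
      fix t assume t: "t \<in> I"
      have 1: "V t \<in> carrier_mat (N+1) (N+1) \<and> Vi t \<in> carrier_mat (N+1) (N+1)
        \<and> V t * Vi t = 1\<^sub>m (N+1) \<and> Vi t * V t = 1\<^sub>m (N+1)"
        using Ai[OF s0 t] Ai[OF t s0] unfolding V_def Vi_def by auto
      have 2: "lower_triangular_mat (V t)" using Ai_low[OF t s0] A_lower unfolding V_def by auto
      have 3: "V t $$ (i,i) > 0" if i: "i \<le> N" for i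
      proof (cases "s0 \<le> t")
        case True thus ?thesis using diag_pos[OF i s0 t] i by (simp add: V_def A_mat_def)
      next
        case False thus ?thesis using Ai_low[OF t s0] i by (simp add: V_def)
      qed
      show "V t \<in> carrier_mat (N+1) (N+1) \<and> Vi t \<in> carrier_mat (N+1) (N+1)
              \<and> V t * Vi t = 1\<^sub>m (N+1) \<and> Vi t * V t = 1\<^sub>m (N+1)
              \<and> lower_triangular_mat (V t) \<and> (\<forall>i\<le>N. V t $$ (i,i) > 0)"
        using 1 2 3 by blast
    qed
  next
    show "\<forall>s\<in>I. \<forall>u\<in>I. s \<le> u \<longrightarrow> A_mat N \<gamma> s u = V u * Vi s"
    proof (intro ballI impI)
    fix s u assume s: "s \<in> I" and u: "u \<in> I" and su: "s \<le> u"
    show "A_mat N \<gamma> s u = V u * Vi s"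
    proof (cases "s0 \<le> s")
      case True
      hence "s0 \<le> u" using su by simp
      have Ais: "Ai s0 s \<in> carrier_mat (Suc N) (Suc N)" "A_mat N \<gamma> s0 s * Ai s0 s = 1\<^sub>m (Suc N)"
        using Ai[OF s0 s True] by auto
      have "V u * Vi s = A_mat N \<gamma> s0 u * Ai s0 s" using True \<open>s0 \<le> u\<close> by (simp add: V_def Vi_def)
      also have "\<dots> = (A_mat N \<gamma> s u * A_mat N \<gamma> s0 s) * Ai s0 s"
        using CK[OF le_refl s0 s u True su] by simp
      also have "\<dots> = A_mat N \<gamma> s u * (A_mat N \<gamma> s0 s * Ai s0 s)"
        by (rule assoc_mult_mat[of _ "Suc N" "Suc N" _ "Suc N" _ "Suc N"]) (use Ais in auto)
      also have "\<dots> = A_mat N \<gamma> s u"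
        using Ais right_mult_one_mat[of "A_mat N \<gamma> s u" "Suc N" "Suc N"] by simp
      finally show ?thesis by simp
    next
      case False
      show ?thesis
      proof (cases "s0 \<le> u")
        case True
        have "V u * Vi s = A_mat N \<gamma> s0 u * A_mat N \<gamma> s s0" using True False by (simp add: V_def Vi_def)
        also have "\<dots> = A_mat N \<gamma> s u" using CK[OF le_refl s s0 u _ True] False by simp
        finally show ?thesis by simp
      next
        case False2: False
        have Aiu: "Ai u s0 \<in> carrier_mat (Suc N) (Suc N)" "Ai u s0 * A_mat N \<gamma> u s0 = 1\<^sub>m (Suc N)"
          using Ai[OF u s0] False2 by auto
        have "V u * Vi s = Ai u s0 * A_mat N \<gamma> s s0" using False False2 by (simp add: V_def Vi_def)
        also have "\<dots> = Ai u s0 * (A_mat N \<gamma> u s0 * A_mat N \<gamma> s u)"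
          using CK[OF le_refl s u s0 su] False2 by simp
        also have "\<dots> = (Ai u s0 * A_mat N \<gamma> u s0) * A_mat N \<gamma> s u"
          by (rule assoc_mult_mat[symmetric, of _ "Suc N" "Suc N" _ "Suc N" _ "Suc N"]) (use Aiu in auto)
        also have "\<dots> = A_mat N \<gamma> s u"
          using Aiu left_mult_one_mat[of "A_mat N \<gamma> s u" "Suc N" "Suc N"] by simp
        finally show ?thesis by simp
      qed
    qed
  qed
  qed
qed

end

theorem proposition1:
  fixes M :: "'a measure" and X :: "real \<Rightarrow> 'a \<Rightarrow> real" and l r :: ereal
    and N :: nat and \<gamma> :: "nat \<Rightarrow> nat \<Rightarrow> real \<Rightarrow> real \<Rightarrow> real"
  defines "I \<equiv> segment l r"
  assumes "prob_space M"
    and "N \<ge> 1"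
    and "\<forall>t\<in>I. X t \<in> borel_measurable M"
    and "\<forall>t\<in>I. \<forall>n::nat. integrable M (\<lambda>x. \<bar>X t x\<bar> ^ n)"
    and "\<forall>t\<in>I. infinite (law_support M (X t))"
    and "markov_process M I X"
    and "TLI N M I X"
    and "MSC N M I X"
    and "poly_regression N M I X \<gamma>"
    and "\<forall>s t. \<gamma> 0 0 s t = 1"
    and "\<forall>i j s t. j > i \<longrightarrow> \<gamma> i j s t = 0"
  shows "(\<forall>s\<in>I. \<forall>t\<in>I. \<forall>u\<in>I. s \<le> t \<and> t \<le> u \<longrightarrow>
            invertible_mat (A_mat N \<gamma> s t)
          \<and> A_mat N \<gamma> s u = A_mat N \<gamma> t u * A_mat N \<gamma> s t
          \<and> A_mat N \<gamma> s s = 1\<^sub>m (N+1))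
       \<and> (\<exists>V Vinv. (\<forall>t\<in>I. V t \<in> carrier_mat (N+1) (N+1) \<and> Vinv t \<in> carrier_mat (N+1) (N+1)
              \<and> V t * Vinv t = 1\<^sub>m (N+1) \<and> Vinv t * V t = 1\<^sub>m (N+1)
              \<and> lower_triangular_mat (V t))
            \<and> (\<forall>s\<in>I. \<forall>u\<in>I. s \<le> u \<longrightarrow> A_mat N \<gamma> s u = V u * Vinv s))
       \<and> (\<exists>V Vinv. (\<forall>t\<in>I. V t \<in> carrier_mat (N+1) (N+1) \<and> Vinv t \<in> carrier_mat (N+1) (N+1)
              \<and> V t * Vinv t = 1\<^sub>m (N+1) \<and> Vinv t * V t = 1\<^sub>m (N+1)
              \<and> lower_triangular_mat (V t) \<and> (\<forall>i\<le>N. V t $$ (i,i) > 0))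
            \<and> (\<forall>s\<in>I. \<forall>u\<in>I. s \<le> u \<longrightarrow> A_mat N \<gamma> s u = V u * Vinv s))"
proof -
  have conv: "b \<in> I" if "a \<in> I" "c \<in> I" "a \<le> b" "b \<le> c" for a b c
  proof -
    have ab: "ereal a \<le> ereal b" and bc: "ereal b \<le> ereal c" using that by simp_all
    have la: "l \<le> ereal a" and cr: "ereal c \<le> r" using that unfolding I_def segment_def by auto
    have "l \<le> ereal b" using order.trans[OF la ab] .
    moreover have "ereal b \<le> r" using order.trans[OF bc cr] .
    ultimately show ?thesis unfolding I_def segment_def by simp
  qed
  interpret mpr M I X N \<gamma>
    by (rule mpr.intro[OF \<open>prob_space M\<close> mpr_axioms.intro[OF conv
          \<open>\<forall>t\<in>I. X t \<in> borel_measurable M\<close>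
          \<open>\<forall>t\<in>I. \<forall>n::nat. integrable M (\<lambda>x. \<bar>X t x\<bar> ^ n)\<close>
          \<open>\<forall>t\<in>I. infinite (law_support M (X t))\<close>
          \<open>MSC N M I X\<close> \<open>poly_regression N M I X \<gamma>\<close>
          \<open>\<forall>s t. \<gamma> 0 0 s t = 1\<close> \<open>\<forall>i j s t. j > i \<longrightarrow> \<gamma> i j s t = 0\<close>]])
  have P1: "\<forall>s\<in>I. \<forall>t\<in>I. \<forall>u\<in>I. s \<le> t \<and> t \<le> u \<longrightarrow>
            invertible_mat (A_mat N \<gamma> s t)
          \<and> A_mat N \<gamma> s u = A_mat N \<gamma> t u * A_mat N \<gamma> s t
          \<and> A_mat N \<gamma> s s = 1\<^sub>m (N+1)"
  proof (intro ballI impI)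
    fix s t u assume "s \<in> I" "t \<in> I" "u \<in> I" "s \<le> t \<and> t \<le> u"
    thus "invertible_mat (A_mat N \<gamma> s t)
          \<and> A_mat N \<gamma> s u = A_mat N \<gamma> t u * A_mat N \<gamma> s t
          \<and> A_mat N \<gamma> s s = 1\<^sub>m (N+1)" using parts_i_ii[of s t u] by simp
  qed
  from V_exists obtain V Vinv where
    VV1: "\<forall>t\<in>I. V t \<in> carrier_mat (N+1) (N+1) \<and> Vinv t \<in> carrier_mat (N+1) (N+1)
              \<and> V t * Vinv t = 1\<^sub>m (N+1) \<and> Vinv t * V t = 1\<^sub>m (N+1)
              \<and> lower_triangular_mat (V t) \<and> (\<forall>i\<le>N. V t $$ (i,i) > 0)"
    and VV2: "\<forall>s\<in>I. \<forall>u\<in>I. s \<le> u \<longrightarrow> A_mat N \<gamma> s u = V u * Vinv s" by blast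
  have VV1': "\<forall>t\<in>I. V t \<in> carrier_mat (N+1) (N+1) \<and> Vinv t \<in> carrier_mat (N+1) (N+1)
              \<and> V t * Vinv t = 1\<^sub>m (N+1) \<and> Vinv t * V t = 1\<^sub>m (N+1)
              \<and> lower_triangular_mat (V t)" using VV1 by simp
  show ?thesis
  proof (intro conjI)
    show "\<exists>V Vinv. (\<forall>t\<in>I. V t \<in> carrier_mat (N+1) (N+1) \<and> Vinv t \<in> carrier_mat (N+1) (N+1)
              \<and> V t * Vinv t = 1\<^sub>m (N+1) \<and> Vinv t * V t = 1\<^sub>m (N+1)
              \<and> lower_triangular_mat (V t))
            \<and> (\<forall>s\<in>I. \<forall>u\<in>I. s \<le> u \<longrightarrow> A_mat N \<gamma> s u = V u * Vinv s)"
      by (rule exI[of _ V], rule exI[of _ Vinv]) (use VV1' VV2 in simp)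
    show "\<exists>V Vinv. (\<forall>t\<in>I. V t \<in> carrier_mat (N+1) (N+1) \<and> Vinv t \<in> carrier_mat (N+1) (N+1)
              \<and> V t * Vinv t = 1\<^sub>m (N+1) \<and> Vinv t * V t = 1\<^sub>m (N+1)
              \<and> lower_triangular_mat (V t) \<and> (\<forall>i\<le>N. V t $$ (i,i) > 0))
            \<and> (\<forall>s\<in>I. \<forall>u\<in>I. s \<le> u \<longrightarrow> A_mat N \<gamma> s u = V u * Vinv s)"
      by (rule exI[of _ V], rule exI[of _ Vinv]) (use VV1 VV2 in simp)
  qed (rule P1)
qed

end
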